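(* Let $G$ be a finite group, $\mathcal H$ a finite-dimensional Hilbert space, $\rho$ a state on $\mathcal H$, $\epsilon\ge0$, and let $f:G\to\mathscr U(\mathcal H)$ be an $(\epsilon,\rho)$-homomorphism. Suppose $S\le G$ is a subgroup such that $f(sg)=f(s)f(g)$ for all $s\in S$, $g\in G$. Then $f|_S$ is a representation of $S$, and there exist a finite-dimensional Hilbert space $\mathcal K$, an isometry $V:\mathcal H\to\mathcal K$ and a representation $\phi:G\to\mathscr U(\mathcal K)$ such that $$\|Vf(g)-\phi(g)V\|_\rho^2\le\epsilon\quad\text{for all } g\in G,$$ and every irreducible component $\xi$ of $\phi$ satisfies $\widehat{f|_S}(\xi|_S)\neq0$.
   Context: $\mathscr U(\mathcal H)$ is the unitary group of $\mathcal H$. For a state $\rho$ on $\mathcal H$ and a linear map $T$ from $\mathcal H$ to some Hilbert space, $\|T\|_\rho=\sqrt{\mathrm{Tr}(T^*T\rho)}$. A function $f:G\to\mathscr U(\mathcal H)$ is an $(\epsilon,\rho)$-homomorphism if for every $g\in G$, $\frac1{|G|}\sum_{h\in G}\|f(h)f(g)-f(hg)\|_\rho^2\le\epsilon$. For a finite group $S$, a function $u:S\to\mathscr U(\mathcal H)$, and a unitary representation $\xi:S\to\mathscr U(\mathbb C^d)$, the Fourier transform is $\hat u(\xi)=\frac1{|S|}\sum_{s\in S}u(s)\otimes\overline{\xi(s)}$ on $\mathcal H\otimes\mathbb C^d$, where $\overline{\xi(s)}$ is the entrywise complex conjugate in the standard basis. An irreducible component of a representation $\phi$ of $G$ is an irreducible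 representation appearing in a decomposition of $\phi$ (up to unitary equivalence) as a direct sum of irreducibles. *)

theory Defs
  imports "HOL-Algebra.Group" "Jordan_Normal_Form.Schur_Decomposition"
begin

text \<open>Finite-dimensional Hilbert spaces are modelled as \<open>\<complex>^n\<close>; linear maps
  \<open>\<complex>^n \<rightarrow> \<complex>^m\<close> as complex m x n matrices (Jordan_Normal_Form).\<close>

definition mtrace :: "complex mat \<Rightarrow> complex" where
  "mtrace A = (\<Sum>i<dim_row A. A $$ (i,i))"

definition unitary_mat :: "nat \<Rightarrow> complex mat \<Rightarrow> bool" where
  "unitary_mat n U \<longleftrightarrow> U \<in> carrier_mat n n \<and> mat_adjoint U * U = 1\<^sub>m n \<and> U * mat_adjoint U = 1\<^sub>m n"

definition isometry_mat :: "nat \<Rightarrow> nat \<Rightarrow> complex mat \<Rightarrow> bool" where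
  "isometry_mat m n V \<longleftrightarrow> V \<in> carrier_mat m n \<and> mat_adjoint V * V = 1\<^sub>m n"

definition is_state :: "nat \<Rightarrow> complex mat \<Rightarrow> bool" where
  "is_state n \<rho> \<longleftrightarrow> \<rho> \<in> carrier_mat n n \<and> mat_adjoint \<rho> = \<rho> \<and>
     (\<forall>v \<in> carrier_vec n. Im (conjugate v \<bullet> (\<rho> *\<^sub>v v)) = 0 \<and> 0 \<le> Re (conjugate v \<bullet> (\<rho> *\<^sub>v v))) \<and>
     mtrace \<rho> = 1"

definition rho_norm :: "complex mat \<Rightarrow> complex mat \<Rightarrow> real" where
  "rho_norm \<rho> T = sqrt (Re (mtrace (mat_adjoint T * T * \<rho>)))"

definition approx_hom :: "('g, 'b) monoid_scheme \<Rightarrow> nat \<Rightarrow> complex mat \<Rightarrow> real \<Rightarrow> ('g \<Rightarrow> complex mat) \<Rightarrow> bool" where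
  "approx_hom G n \<rho> \<epsilon> f \<longleftrightarrow> (\<forall>g \<in> carrier G. unitary_mat n (f g)) \<and>
     (\<forall>g \<in> carrier G. (1 / real (card (carrier G))) *
        (\<Sum>h \<in> carrier G. (rho_norm \<rho> (f h * f g - f (h \<otimes>\<^bsub>G\<^esub> g)))\<^sup>2) \<le> \<epsilon>)"

definition unitary_rep :: "('g, 'b) monoid_scheme \<Rightarrow> nat \<Rightarrow> ('g \<Rightarrow> complex mat) \<Rightarrow> bool" where
  "unitary_rep G d \<phi> \<longleftrightarrow> (\<forall>g \<in> carrier G. unitary_mat d (\<phi> g)) \<and>
     (\<forall>g \<in> carrier G. \<forall>h \<in> carrier G. \<phi> (g \<otimes>\<^bsub>G\<^esub> h) = \<phi> g * \<phi> h)"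

definition invariant_subspace :: "('g, 'b) monoid_scheme \<Rightarrow> nat \<Rightarrow> ('g \<Rightarrow> complex mat) \<Rightarrow> complex vec set \<Rightarrow> bool" where
  "invariant_subspace G d \<xi> W \<longleftrightarrow> W \<subseteq> carrier_vec d \<and> 0\<^sub>v d \<in> W \<and>
     (\<forall>v \<in> W. \<forall>w \<in> W. v + w \<in> W) \<and> (\<forall>c. \<forall>v \<in> W. c \<cdot>\<^sub>v v \<in> W) \<and>
     (\<forall>g \<in> carrier G. \<forall>v \<in> W. \<xi> g *\<^sub>v v \<in> W)"

definition irreducible_rep :: "('g, 'b) monoid_scheme \<Rightarrow> nat \<Rightarrow> ('g \<Rightarrow> complex mat) \<Rightarrow> bool" where
  "irreducible_rep G d \<xi> \<longleftrightarrow> unitary_rep G d \<xi> \<and> 0 < d \<and>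
     (\<forall>W. invariant_subspace G d \<xi> W \<longrightarrow> W = {0\<^sub>v d} \<or> W = carrier_vec d)"

fun block_diag :: "complex mat list \<Rightarrow> complex mat" where
  "block_diag [] = 0\<^sub>m 0 0"
| "block_diag (A # As) = four_block_mat A (0\<^sub>m (dim_row A) (dim_col (block_diag As)))
      (0\<^sub>m (dim_row (block_diag As)) (dim_col A)) (block_diag As)"

definition irr_component :: "('g, 'b) monoid_scheme \<Rightarrow> nat \<Rightarrow> ('g \<Rightarrow> complex mat) \<Rightarrow> nat \<Rightarrow> ('g \<Rightarrow> complex mat) \<Rightarrow> bool" where
  "irr_component G m \<phi> d \<xi> \<longleftrightarrow>
     (\<exists>(comps :: (nat \<times> ('g \<Rightarrow> complex mat)) list) U.
        (\<forall>(k, \<eta>) \<in> set comps. irreducible_rep G k \<eta>) \<and>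
        unitary_mat m U \<and>
        (\<forall>g \<in> carrier G. U * \<phi> g * mat_adjoint U = block_diag (map (\<lambda>(k, \<eta>). \<eta> g) comps)) \<and>
        (d, \<xi>) \<in> set comps)"

definition kron :: "complex mat \<Rightarrow> complex mat \<Rightarrow> complex mat" where
  "kron A B = mat (dim_row A * dim_row B) (dim_col A * dim_col B)
     (\<lambda>(i,j). A $$ (i div dim_row B, j div dim_col B) * B $$ (i mod dim_row B, j mod dim_col B))"

definition fourier :: "'g set \<Rightarrow> nat \<Rightarrow> ('g \<Rightarrow> complex mat) \<Rightarrow> nat \<Rightarrow> ('g \<Rightarrow> complex mat) \<Rightarrow> complex mat" where
  "fourier S n u d \<xi> = mat (n * d) (n * d)
     (\<lambda>ij. (\<Sum>s \<in> S. kron (u s) (map_mat cnj (\<xi> s)) $$ ij) / of_nat (card S))"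

end

theory Submission
  imports Defs
begin


lemma adj_dims[simp]: "dim_row (mat_adjoint A) = dim_col A" "dim_col (mat_adjoint A) = dim_row A"
  by (auto simp: mat_adjoint_def)

lemma adj_index[simp]: "i < dim_col A \<Longrightarrow> j < dim_row A \<Longrightarrow> mat_adjoint (A::complex mat) $$ (i,j) = cnj (A $$ (j,i))"
  by (auto simp: mat_adjoint_def mat_of_rows_index)

lemma adj_carrier[simp]: assumes "A \<in> carrier_mat a b" shows "mat_adjoint A \<in> carrier_mat b a"
proof (rule carrier_matI)
  show "dim_row (mat_adjoint A) = b" using carrier_matD(2)[OF assms] by simp
  show "dim_col (mat_adjoint A) = a" using carrier_matD(1)[OF assms] by simp
qed

lemma mult_entry: "i < dim_row A \<Longrightarrow> j < dim_col B \<Longrightarrow> dim_col A = dim_row B \<Longrightarrow>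
  (A * B) $$ (i,j) = (\<Sum>l<dim_col A. A $$ (i,l) * B $$ (l,j))"
  by (auto simp: scalar_prod_def lessThan_atLeast0 intro!: sum.cong)

declare index_mult_mat(1)[simp del]

lemma sum_split: "(\<Sum>l<k*n. F l) = (\<Sum>b<k. \<Sum>c<n. F (b*n+c::nat))"
proof -
  have "(\<Sum>l<k*n. F l) = (\<Sum>b<k. sum F {b*n..<b*n+n})" by (simp add: sum.nat_group)
  also have "\<dots> = (\<Sum>b<k. \<Sum>c<n. F (b*n+c))"
  proof (rule sum.cong[OF refl])
    fix b
    have "sum F {b*n..<b*n+n} = sum F {0+b*n..<n+b*n}" by (simp add: add.commute)
    also have "\<dots> = (\<Sum>c\<in>{0..<n}. F (c + b*n))" by (rule sum.shift_bounds_nat_ivl)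
    also have "\<dots> = (\<Sum>c<n. F (b*n+c))" by (simp add: lessThan_atLeast0 add.commute)
    finally show "sum F {b*n..<b*n+n} = (\<Sum>c<n. F (b*n+c))" .
  qed
  finally show ?thesis .
qed

lemma idx_lt: "b < k \<Longrightarrow> c < (n::nat) \<Longrightarrow> b*n+c < k*n"
proof -
  assume "b < k" "c < n"
  then have "Suc b * n \<le> k * n" by (intro mult_le_mono1) simp
  then show ?thesis using \<open>c < n\<close> by simp
qed

lemma idx_div[simp]: "c < (n::nat) \<Longrightarrow> (b*n+c) div n = b" by simp
lemma idx_mod[simp]: "c < (n::nat) \<Longrightarrow> (b*n+c) mod n = c" by simp

lemma adj_mult: assumes "A \<in> carrier_mat a b" "B \<in> carrier_mat b c"
  shows "mat_adjoint (A * (B::complex mat)) = mat_adjoint B * mat_adjoint A"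
proof (rule eq_matI)
  fix i j assume "i < dim_row (mat_adjoint B * mat_adjoint A)" "j < dim_col (mat_adjoint B * mat_adjoint A)"
  then have ij: "i < c" "j < a" using assms by auto
  show "mat_adjoint (A * B) $$ (i, j) = (mat_adjoint B * mat_adjoint A) $$ (i, j)"
    using assms ij by (simp add: mult_entry cnj_sum mult.commute)
qed (use assms in auto)

lemma adj_adj[simp]: "mat_adjoint (mat_adjoint (A::complex mat)) = A"
  by (rule eq_matI) auto

lemma gram_smult: assumes "X \<in> carrier_mat n w"
  shows "mat_adjoint (c \<cdot>\<^sub>m X) * (c \<cdot>\<^sub>m X) = (cnj c * c) \<cdot>\<^sub>m (mat_adjoint X * (X::complex mat))"
proof (rule eq_matI)
  fix i j assume "i < dim_row ((cnj c * c) \<cdot>\<^sub>m (mat_adjoint X * X))" "j < dim_col ((cnj c * c) \<cdot>\<^sub>m (mat_adjoint X * X))"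
  then have ij: "i < w" "j < w" using assms by auto
  show "(mat_adjoint (c \<cdot>\<^sub>m X) * (c \<cdot>\<^sub>m X)) $$ (i, j) = ((cnj c * c) \<cdot>\<^sub>m (mat_adjoint X * X)) $$ (i, j)"
    using assms ij by (simp add: mult_entry sum_distrib_left mult_ac)
qed (use assms in auto)

lemma mtrace_smult: assumes "Q \<in> carrier_mat w w" "\<rho> \<in> carrier_mat w w"
  shows "mtrace ((d \<cdot>\<^sub>m Q) * \<rho>) = d * mtrace (Q * \<rho>)"
  using assms by (simp add: mtrace_def sum_distrib_left mult_smult_assoc_mat)

lemma mtrace_sum: assumes "\<And>a. a \<in> A \<Longrightarrow> Q a \<in> carrier_mat w w" "\<rho> \<in> carrier_mat w w" "finite A"
  shows "mtrace (mat w w (\<lambda>(i,j). \<Sum>a\<in>A. Q a $$ (i,j)) * \<rho>) = (\<Sum>a\<in>A. mtrace (Q a * \<rho>))"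
proof -
  have "mtrace (mat w w (\<lambda>(i,j). \<Sum>a\<in>A. Q a $$ (i,j)) * \<rho>) =
     (\<Sum>i<w. \<Sum>l<w. (\<Sum>a\<in>A. Q a $$ (i,l)) * \<rho> $$ (l,i))"
    using assms by (simp add: mtrace_def mult_entry)
  also have "\<dots> = (\<Sum>i<w. \<Sum>l<w. \<Sum>a\<in>A. Q a $$ (i,l) * \<rho> $$ (l,i))"
    by (simp add: sum_distrib_right)
  also have "\<dots> = (\<Sum>i<w. \<Sum>a\<in>A. \<Sum>l<w. Q a $$ (i,l) * \<rho> $$ (l,i))"
    by (rule sum.cong[OF refl], rule sum.swap)
  also have "\<dots> = (\<Sum>a\<in>A. \<Sum>i<w. \<Sum>l<w. Q a $$ (i,l) * \<rho> $$ (l,i))"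
    by (rule sum.swap)
  also have "\<dots> = (\<Sum>a\<in>A. mtrace (Q a * \<rho>))"
  proof (intro sum.cong refl)
    fix a assume "a \<in> A"
    then have Qa: "dim_row (Q a) = w" "dim_col (Q a) = w" using assms(1) by auto
    have r: "dim_row \<rho> = w" "dim_col \<rho> = w" using assms(2) by auto
    show "(\<Sum>i<w. \<Sum>l<w. Q a $$ (i,l) * \<rho> $$ (l,i)) = mtrace (Q a * \<rho>)"
      using Qa r by (simp add: mtrace_def mult_entry)
  qed
  finally show ?thesis .
qed

lemma sqrt_sq_abs: "(sqrt x)\<^sup>2 = \<bar>x\<bar>"
proof (cases "x \<ge> 0")
  case True then show ?thesis by simp
next
  case False
  then have "sqrt x = - sqrt (-x)" using real_sqrt_minus[of "-x"] by simp
  then show ?thesis using False by simp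
qed

lemma rho_norm_sq: "(rho_norm \<rho> T)\<^sup>2 = \<bar>Re (mtrace (mat_adjoint T * T * \<rho>))\<bar>"
  unfolding rho_norm_def by (rule sqrt_sq_abs)

lemma rho_norm_unitary: assumes "unitary_mat n U" "X \<in> carrier_mat n w"
  shows "rho_norm \<rho> (U * X) = rho_norm \<rho> X"
proof -
  have U: "U \<in> carrier_mat n n" "mat_adjoint U * U = 1\<^sub>m n" using assms unfolding unitary_mat_def by auto
  have "mat_adjoint (U * X) * (U * X) = (mat_adjoint X * mat_adjoint U) * (U * X)"
    using adj_mult[OF U(1) assms(2)] by simp
  also have "\<dots> = mat_adjoint X * (mat_adjoint U * (U * X))"
    using U assms(2) assoc_mult_mat[of "mat_adjoint X" w n "mat_adjoint U" n "U*X" w] by simp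
  also have "mat_adjoint U * (U * X) = X"
    using U assms(2) assoc_mult_mat[of "mat_adjoint U" n n U n X w] by simp
  finally show ?thesis unfolding rho_norm_def by simp
qed

definition pmat :: "nat \<Rightarrow> nat \<Rightarrow> (nat \<Rightarrow> nat) \<Rightarrow> (nat \<Rightarrow> complex mat) \<Rightarrow> complex mat" where
  "pmat k n p M = mat (k*n) (k*n) (\<lambda>(i,j). if j div n = p (i div n) then M (i div n) $$ (i mod n, j mod n) else 0)"

definition colb :: "nat \<Rightarrow> nat \<Rightarrow> nat \<Rightarrow> (nat \<Rightarrow> complex mat) \<Rightarrow> complex mat" where
  "colb k n w v = mat (k*n) w (\<lambda>(i,j). v (i div n) $$ (i mod n, j))"

lemma pmat_dims[simp]: "dim_row (pmat k n p M) = k*n" "dim_col (pmat k n p M) = k*n"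
  "pmat k n p M \<in> carrier_mat (k*n) (k*n)"
  by (auto simp: pmat_def)

lemma colb_dims[simp]: "dim_row (colb k n w v) = k*n" "dim_col (colb k n w v) = w"
  "colb k n w v \<in> carrier_mat (k*n) w"
  by (auto simp: colb_def)

lemma div_lt: "i < k*n \<Longrightarrow> i div n < (k::nat)"
  by (simp add: less_mult_imp_div_less)

lemma mod_lt: "i < k*n \<Longrightarrow> i mod n < (n::nat)"
  by (cases "n = 0") auto

lemma pmat_mult_entry:
  assumes "dim_row X = k*n" "i < k*n" "j < dim_col X" "p (i div n) < k"
    "M (i div n) \<in> carrier_mat n n"
  shows "(pmat k n p M * X) $$ (i,j) = (\<Sum>c<n. M (i div n) $$ (i mod n, c) * X $$ (p (i div n) * n + c, j))"
proof -
  have "(pmat k n p M * X) $$ (i,j) = (\<Sum>l<k*n. pmat k n p M $$ (i,l) * X $$ (l,j))"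
    using assms by (simp add: mult_entry)
  also have "\<dots> = (\<Sum>b<k. \<Sum>c<n. pmat k n p M $$ (i,b*n+c) * X $$ (b*n+c,j))"
    by (rule sum_split)
  also have "\<dots> = (\<Sum>b<k. if b = p (i div n) then (\<Sum>c<n. M (i div n) $$ (i mod n, c) * X $$ (p (i div n) * n + c, j)) else 0)"
    using assms(2) by (intro sum.cong refl) (auto simp: pmat_def idx_lt)
  also have "\<dots> = (\<Sum>c<n. M (i div n) $$ (i mod n, c) * X $$ (p (i div n) * n + c, j))"
    using assms(4) by simp
  finally show ?thesis .
qed

lemma pmat_mult_pmat:
  assumes "\<And>a. a < k \<Longrightarrow> p a < k" "\<And>a. a < k \<Longrightarrow> q a < k"
    "\<And>a. a < k \<Longrightarrow> M a \<in> carrier_mat n n" "\<And>a. a < k \<Longrightarrow> N a \<in> carrier_mat n n"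
  shows "pmat k n p M * pmat k n q N = pmat k n (\<lambda>a. q (p a)) (\<lambda>a. M a * N (p a))"
proof (rule eq_matI)
  fix i j assume "i < dim_row (pmat k n (\<lambda>a. q (p a)) (\<lambda>a. M a * N (p a)))"
     "j < dim_col (pmat k n (\<lambda>a. q (p a)) (\<lambda>a. M a * N (p a)))"
  then have ij: "i < k*n" "j < k*n" by auto
  have a: "i div n < k" "i mod n < n" "j mod n < n" using ij div_lt mod_lt by auto
  have pa: "p (i div n) < k" using assms(1) a by auto
  have "(pmat k n p M * pmat k n q N) $$ (i,j) =
     (\<Sum>c<n. M (i div n) $$ (i mod n, c) * pmat k n q N $$ (p (i div n) * n + c, j))"
    using ij a pa assms by (intro pmat_mult_entry) auto
  also have "\<dots> = (\<Sum>c<n. M (i div n) $$ (i mod n, c) * (if j div n = q (p (i div n)) then N (p (i div n)) $$ (c, j mod n) else 0))"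
    using ij pa by (intro sum.cong refl) (simp add: pmat_def idx_lt)
  also have "\<dots> = (if j div n = q (p (i div n)) then (M (i div n) * N (p (i div n))) $$ (i mod n, j mod n) else 0)"
    using assms(3)[OF a(1)] assms(4)[OF pa] a by (auto simp: mult_entry)
  also have "\<dots> = pmat k n (\<lambda>a. q (p a)) (\<lambda>a. M a * N (p a)) $$ (i,j)"
    using ij by (simp add: pmat_def)
  finally show "(pmat k n p M * pmat k n q N) $$ (i,j) = pmat k n (\<lambda>a. q (p a)) (\<lambda>a. M a * N (p a)) $$ (i,j)" .
qed auto

lemma pmat_mult_colb:
  assumes "\<And>a. a < k \<Longrightarrow> p a < k"
    "\<And>a. a < k \<Longrightarrow> M a \<in> carrier_mat n n" "\<And>a. a < k \<Longrightarrow> v a \<in> carrier_mat n w"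
  shows "pmat k n p M * colb k n w v = colb k n w (\<lambda>a. M a * v (p a))"
proof (rule eq_matI)
  fix i j assume "i < dim_row (colb k n w (\<lambda>a. M a * v (p a)))" "j < dim_col (colb k n w (\<lambda>a. M a * v (p a)))"
  then have ij: "i < k*n" "j < w" by auto
  have a: "i div n < k" "i mod n < n" using ij div_lt mod_lt by auto
  have pa: "p (i div n) < k" using assms(1) a by auto
  have "(pmat k n p M * colb k n w v) $$ (i,j) =
     (\<Sum>c<n. M (i div n) $$ (i mod n, c) * colb k n w v $$ (p (i div n) * n + c, j))"
    using ij a pa assms by (intro pmat_mult_entry) auto
  also have "\<dots> = (\<Sum>c<n. M (i div n) $$ (i mod n, c) * v (p (i div n)) $$ (c, j))"
    using ij pa by (intro sum.cong refl) (simp add: colb_def idx_lt)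
  also have "\<dots> = colb k n w (\<lambda>a. M a * v (p a)) $$ (i,j)"
    using ij a pa assms(2)[OF a(1)] assms(3)[OF pa] by (auto simp: colb_def mult_entry)
  finally show "(pmat k n p M * colb k n w v) $$ (i,j) = colb k n w (\<lambda>a. M a * v (p a)) $$ (i,j)" .
qed auto

lemma colb_mult:
  assumes "\<And>a. a < k \<Longrightarrow> v a \<in> carrier_mat n w" "B \<in> carrier_mat w w'"
  shows "colb k n w v * B = colb k n w' (\<lambda>a. v a * B)"
proof (rule eq_matI)
  fix i j assume "i < dim_row (colb k n w' (\<lambda>a. v a * B))" "j < dim_col (colb k n w' (\<lambda>a. v a * B))"
  then have ij: "i < k*n" "j < w'" by auto
  have a: "i div n < k" "i mod n < n" using ij div_lt mod_lt by auto
  show "(colb k n w v * B) $$ (i,j) = colb k n w' (\<lambda>a. v a * B) $$ (i,j)"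
    using ij a assms(1)[OF a(1)] assms(2) by (auto simp: colb_def mult_entry)
qed (use assms in auto)

lemma colb_minus:
  assumes "\<And>a. a < k \<Longrightarrow> v a \<in> carrier_mat n w" "\<And>a. a < k \<Longrightarrow> v' a \<in> carrier_mat n w"
  shows "colb k n w v - colb k n w v' = colb k n w (\<lambda>a. v a - v' a)"
proof (rule eq_matI)
  fix i j assume "i < dim_row (colb k n w (\<lambda>a. v a - v' a))" "j < dim_col (colb k n w (\<lambda>a. v a - v' a))"
  then have ij: "i < k*n" "j < w" by auto
  have a: "i div n < k" "i mod n < n" using ij div_lt mod_lt by auto
  show "(colb k n w v - colb k n w v') $$ (i,j) = colb k n w (\<lambda>a. v a - v' a) $$ (i,j)"
    using ij a assms(1)[OF a(1)] assms(2)[OF a(1)] by (auto simp: colb_def)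
qed auto

lemma colb_gram:
  assumes "\<And>a. a < k \<Longrightarrow> v a \<in> carrier_mat n w"
  shows "mat_adjoint (colb k n w v) * colb k n w v = mat w w (\<lambda>(i,j). \<Sum>a<k. (mat_adjoint (v a) * v a) $$ (i,j))"
proof (rule eq_matI)
  fix i j assume "i < dim_row (mat w w (\<lambda>(i,j). \<Sum>a<k. (mat_adjoint (v a) * v a) $$ (i,j)))"
    "j < dim_col (mat w w (\<lambda>(i,j). \<Sum>a<k. (mat_adjoint (v a) * v a) $$ (i,j)))"
  then have ij: "i < w" "j < w" by auto
  have "(mat_adjoint (colb k n w v) * colb k n w v) $$ (i,j) =
    (\<Sum>l<k*n. cnj (colb k n w v $$ (l,i)) * colb k n w v $$ (l,j))"
    using ij by (simp add: mult_entry)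
  also have "\<dots> = (\<Sum>b<k. \<Sum>c<n. cnj (colb k n w v $$ (b*n+c,i)) * colb k n w v $$ (b*n+c,j))"
    by (rule sum_split)
  also have "\<dots> = (\<Sum>b<k. (mat_adjoint (v b) * v b) $$ (i,j))"
  proof (intro sum.cong refl)
    fix b assume "b \<in> {..<k}"
    then have b: "b < k" by simp
    have "(\<Sum>c<n. cnj (colb k n w v $$ (b*n+c,i)) * colb k n w v $$ (b*n+c,j)) = (\<Sum>c<n. cnj (v b $$ (c,i)) * v b $$ (c,j))"
      using ij b by (intro sum.cong refl) (auto simp: colb_def idx_lt)
    also have "\<dots> = (mat_adjoint (v b) * v b) $$ (i,j)"
      using ij assms[OF b] by (auto simp: mult_entry)
    finally show "(\<Sum>c<n. cnj (colb k n w v $$ (b*n+c,i)) * colb k n w v $$ (b*n+c,j)) = (mat_adjoint (v b) * v b) $$ (i,j)" .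
  qed
  finally show "(mat_adjoint (colb k n w v) * colb k n w v) $$ (i,j) =
     mat w w (\<lambda>(i,j). \<Sum>a<k. (mat_adjoint (v a) * v a) $$ (i,j)) $$ (i,j)" using ij by simp
qed auto

lemma colb_of: assumes "W \<in> carrier_mat (k*n) w"
  shows "W = colb k n w (\<lambda>a. mat n w (\<lambda>(i,j). W $$ (a*n+i, j)))"
proof (rule eq_matI)
  fix i j assume "i < dim_row (colb k n w (\<lambda>a. mat n w (\<lambda>(i,j). W $$ (a*n+i, j))))"
    "j < dim_col (colb k n w (\<lambda>a. mat n w (\<lambda>(i,j). W $$ (a*n+i, j))))"
  then have ij: "i < k*n" "j < w" by auto
  have a: "i mod n < n" using ij mod_lt by auto
  have "i div n * n + i mod n = i" by simp
  then show "W $$ (i,j) = colb k n w (\<lambda>a. mat n w (\<lambda>(i,j). W $$ (a*n+i, j))) $$ (i,j)"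
    using ij a by (simp add: colb_def)
qed (use assms in auto)

lemma colb_inj: assumes "colb k n w v = colb k n w v'" "a < k" "v a \<in> carrier_mat n w" "v' a \<in> carrier_mat n w"
  shows "v a = v' a"
proof (rule eq_matI)
  fix i j assume "i < dim_row (v' a)" "j < dim_col (v' a)"
  then have ij: "i < n" "j < w" using assms by auto
  have "colb k n w v $$ (a*n+i, j) = colb k n w v' $$ (a*n+i, j)" using assms by simp
  then show "v a $$ (i,j) = v' a $$ (i,j)" using ij assms(2) by (simp add: colb_def idx_lt)
qed (use assms in auto)




definition crep :: "('g, 'b) monoid_scheme \<Rightarrow> 'g set \<Rightarrow> 'g \<Rightarrow> 'g" where
  "crep G S x = (if S #>\<^bsub>G\<^esub> x = S then \<one>\<^bsub>G\<^esub> else (SOME y. y \<in> S #>\<^bsub>G\<^esub> x))"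

lemma pmat_cong: "(\<And>a. a < k \<Longrightarrow> p a = p' a) \<Longrightarrow> (\<And>a. a < k \<Longrightarrow> M a = M' a) \<Longrightarrow> pmat k n p M = pmat k n p' M'"
  by (rule eq_matI) (auto simp: pmat_def div_lt)

lemma colb_cong: "(\<And>a. a < k \<Longrightarrow> v a = v' a) \<Longrightarrow> colb k n w v = colb k n w v'"
  by (rule eq_matI) (auto simp: colb_def div_lt)

lemma pmat_id: "pmat k n (\<lambda>a. a) (\<lambda>a. 1\<^sub>m n) = 1\<^sub>m (k*n)"
proof (rule eq_matI)
  fix i j assume "i < dim_row (1\<^sub>m (k*n))" "j < dim_col (1\<^sub>m (k*n))"
  then have ij: "i < k*n" "j < k*n" by auto
  have "(i = j) = (i div n = j div n \<and> i mod n = j mod n)"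
    by (metis div_mult_mod_eq)
  then show "pmat k n (\<lambda>a. a) (\<lambda>a. 1\<^sub>m n) $$ (i, j) = 1\<^sub>m (k * n) $$ (i, j)"
    using ij mod_lt[OF ij(1)] mod_lt[OF ij(2)] by (auto simp: pmat_def)
qed auto

lemma smult_minus: "A \<in> carrier_mat a b \<Longrightarrow> B \<in> carrier_mat a b \<Longrightarrow> c \<cdot>\<^sub>m A - c \<cdot>\<^sub>m B = c \<cdot>\<^sub>m (A - (B :: complex mat))"
  by (rule eq_matI) (auto simp: algebra_simps)

locale ictx = group G for G (structure) +
  fixes S :: "'a set" and f :: "'a \<Rightarrow> complex mat" and n k :: nat and e :: "nat \<Rightarrow> 'a"
  assumes fin: "finite (carrier G)" and sub: "subgroup S G"
    and unit: "\<And>g. g \<in> carrier G \<Longrightarrow> unitary_mat n (f g)"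
    and mulS: "\<And>s g. s \<in> S \<Longrightarrow> g \<in> carrier G \<Longrightarrow> f (s \<otimes> g) = f s * f g"
    and bij: "bij_betw e {..<k} (crep G S ` carrier G)"
begin

lemma S_sub: "S \<subseteq> carrier G" using sub subgroup.subset by blast

lemma S_carr: "s \<in> S \<Longrightarrow> s \<in> carrier G" using S_sub by blast

lemma cancel1[simp]: "a \<in> carrier G \<Longrightarrow> y \<in> carrier G \<Longrightarrow> a \<otimes> inv y \<otimes> y = a"
  by (simp add: m_assoc)
lemma cancel2[simp]: "a \<in> carrier G \<Longrightarrow> y \<in> carrier G \<Longrightarrow> a \<otimes> y \<otimes> inv y = a"
  by (simp add: m_assoc)

lemma coset_eq_iff: assumes x: "x \<in> carrier G" and y: "y \<in> carrier G"
  shows "(S #> x = S #> y) = (x \<otimes> inv y \<in> S)"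
proof
  assume "S #> x = S #> y"
  then have "x \<in> S #> y" using rcos_self[OF x sub] by simp
  then show "x \<otimes> inv y \<in> S" using subgroup.rcos_module_imp[OF sub is_group y] by blast
next
  assume "x \<otimes> inv y \<in> S"
  then have "x \<in> S #> y" using subgroup.rcos_module_rev[OF sub is_group y x] by blast
  then show "S #> x = S #> y" using repr_independence[OF _ y sub] by simp
qed

lemma crep_mem: assumes x: "x \<in> carrier G" shows "crep G S x \<in> S #> x"
proof (cases "S #> x = S")
  case True then show ?thesis by (simp add: crep_def subgroup.one_closed[OF sub])
next
  case False
  have "x \<in> S #> x" using rcos_self[OF x sub] .
  then have "(SOME y. y \<in> S #> x) \<in> S #> x" by (rule someI)
  then show ?thesis using False by (simp add: crep_def)
qed

lemma crep_carrier[simp]: assumes "x \<in> carrier G" shows "crep G S x \<in> carrier G"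
  using subgroup.elemrcos_carrier[OF sub is_group assms crep_mem[OF assms]] .

lemma crep_coset: "x \<in> carrier G \<Longrightarrow> S #> crep G S x = S #> x"
  using repr_independence[OF crep_mem _ sub] by simp

lemma crep_eqI: "S #> x = S #> y \<Longrightarrow> crep G S x = crep G S y"
  by (simp add: crep_def)

lemma crep_eq_iff: assumes "x \<in> carrier G" "y \<in> carrier G"
  shows "(crep G S x = crep G S y) = (x \<otimes> inv y \<in> S)"
proof
  assume "crep G S x = crep G S y"
  then have "S #> x = S #> y" using crep_coset assms by metis
  then show "x \<otimes> inv y \<in> S" using coset_eq_iff[OF assms] by simp
next
  assume "x \<otimes> inv y \<in> S"
  then have "S #> x = S #> y" using coset_eq_iff[OF assms] by simp
  then show "crep G S x = crep G S y" by (rule crep_eqI)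
qed

lemma crep_idem[simp]: assumes "x \<in> carrier G" shows "crep G S (crep G S x) = crep G S x"
  using crep_coset[OF assms] by (rule crep_eqI)

lemma crep_quot: "x \<in> carrier G \<Longrightarrow> x \<otimes> inv (crep G S x) \<in> S"
  using coset_eq_iff[of x "crep G S x"] crep_coset by simp

lemma crep_mult: assumes "x \<in> carrier G" "g \<in> carrier G"
  shows "crep G S (crep G S x \<otimes> g) = crep G S (x \<otimes> g)"
proof (rule crep_eqI)
  have "S #> (crep G S x \<otimes> g) = (S #> crep G S x) #> g"
    using coset_mult_assoc[OF S_sub, of "crep G S x" g] assms by simp
  also have "\<dots> = (S #> x) #> g" using crep_coset assms by simp
  also have "\<dots> = S #> (x \<otimes> g)" using coset_mult_assoc[OF S_sub, of x g] assms by simp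
  finally show "S #> (crep G S x \<otimes> g) = S #> (x \<otimes> g)" .
qed

lemma crep_one[simp]: "crep G S \<one> = \<one>"
  using coset_mult_one[OF S_sub] by (simp add: crep_def)

lemma crep_S: "s \<in> S \<Longrightarrow> crep G S s = \<one>"
  using crep_eq_iff[of s \<one>] S_carr by simp

abbreviation "R \<equiv> crep G S ` carrier G"

lemma R_card: "card R = k" using bij_betw_same_card[OF bij] by simp

lemma R_fin: "finite R" using fin by simp

lemma one_R: "\<one> \<in> R" using image_eqI[of \<one> "crep G S" \<one> "carrier G"] crep_one by simp

definition ie where "ie = the_inv_into {..<k} e"

lemma e_R: "a < k \<Longrightarrow> e a \<in> R" using bij by (auto simp: bij_betw_def)

lemma e_carrier[simp]: assumes "a < k" shows "e a \<in> carrier G"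
proof -
  obtain x where x: "x \<in> carrier G" "e a = crep G S x" using e_R[OF assms] by auto
  then show ?thesis by simp
qed

lemma crep_e[simp]: assumes "a < k" shows "crep G S (e a) = e a"
proof -
  obtain x where x: "x \<in> carrier G" "e a = crep G S x" using e_R[OF assms] by auto
  then show ?thesis by simp
qed

lemma R_crep: assumes "t \<in> R" shows "t \<in> carrier G" "crep G S t = t"
proof -
  obtain x where x: "x \<in> carrier G" "t = crep G S x" using assms by auto
  then show "t \<in> carrier G" "crep G S t = t" by simp_all
qed

lemma ie_e[simp]: "a < k \<Longrightarrow> ie (e a) = a"
  unfolding ie_def using bij by (auto simp: bij_betw_def the_inv_into_f_f)

lemma e_ie[simp]: "t \<in> R \<Longrightarrow> e (ie t) = t"
  unfolding ie_def using bij by (auto simp: bij_betw_def f_the_inv_into_f)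

lemma ie_lt: assumes "t \<in> R" shows "ie t < k"
proof -
  have "ie t \<in> {..<k}" unfolding ie_def using bij assms
    by (intro the_inv_into_into) (auto simp: bij_betw_def)
  then show ?thesis by simp
qed

lemma k_pos: "0 < k" using ie_lt[OF one_R] by simp

definition pi where "pi g a = ie (crep G S (e a \<otimes> g))"
definition sg where "sg g a = e a \<otimes> g \<otimes> inv (crep G S (e a \<otimes> g))"

lemma pi_lt: "a < k \<Longrightarrow> g \<in> carrier G \<Longrightarrow> pi g a < k"
  unfolding pi_def by (rule ie_lt, rule imageI) auto

lemma e_pi: "a < k \<Longrightarrow> g \<in> carrier G \<Longrightarrow> e (pi g a) = crep G S (e a \<otimes> g)"
  unfolding pi_def by (rule e_ie, rule imageI) auto

lemma sg_S: "a < k \<Longrightarrow> g \<in> carrier G \<Longrightarrow> sg g a \<in> S"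
  unfolding sg_def by (rule crep_quot) auto

lemma sg_carr[simp]: assumes "a < k" "g \<in> carrier G" shows "sg g a \<in> carrier G"
  using S_carr[OF sg_S[OF assms]] .

lemma sg_e: "a < k \<Longrightarrow> g \<in> carrier G \<Longrightarrow> sg g a \<otimes> e (pi g a) = e a \<otimes> g"
  using e_pi by (simp add: sg_def)

lemma pi_mult: assumes "a < k" "g \<in> carrier G" "h \<in> carrier G"
  shows "pi h (pi g a) = pi (g \<otimes> h) a"
  using assms by (simp add: pi_def e_pi crep_mult m_assoc)

lemma sg_mult: assumes "a < k" "g \<in> carrier G" "h \<in> carrier G"
  shows "sg g a \<otimes> sg h (pi g a) = sg (g \<otimes> h) a"
proof -
  have c: "crep G S (e (pi g a) \<otimes> h) = crep G S (e a \<otimes> g \<otimes> h)"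
    using assms by (simp add: e_pi crep_mult)
  show ?thesis using assms unfolding sg_def c
    by (simp add: e_pi m_assoc[symmetric])
qed

lemma pi_inv: assumes a: "a < k" and b: "b < k" and g: "g \<in> carrier G"
  shows "(pi g b = a) = (pi (inv g) a = b)"
proof -
  have 1: "(pi g b = a) = (e b \<otimes> g \<otimes> inv (e a) \<in> S)"
  proof -
    have "(pi g b = a) = (crep G S (e b \<otimes> g) = crep G S (e a))"
      using a b g ie_e e_pi[OF b g] by (auto simp: pi_def)
    then show ?thesis using crep_eq_iff[of "e b \<otimes> g" "e a"] a b g by simp
  qed
  have 2: "(pi (inv g) a = b) = (e a \<otimes> inv g \<otimes> inv (e b) \<in> S)"
  proof -
    have "(pi (inv g) a = b) = (crep G S (e a \<otimes> inv g) = crep G S (e b))"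
      using a b g ie_e e_pi[OF a inv_closed[OF g]] by (auto simp: pi_def)
    then show ?thesis using crep_eq_iff[of "e a \<otimes> inv g" "e b"] a b g by simp
  qed
  have 3: "inv (e b \<otimes> g \<otimes> inv (e a)) = e a \<otimes> inv g \<otimes> inv (e b)"
    using a b g by (simp add: inv_mult_group m_assoc)
  have 4: "inv (e a \<otimes> inv g \<otimes> inv (e b)) = e b \<otimes> g \<otimes> inv (e a)"
    using a b g by (simp add: inv_mult_group m_assoc)
  show ?thesis unfolding 1 2
    using 3 4 subgroup.m_inv_closed[OF sub, of "e b \<otimes> g \<otimes> inv (e a)"]
      subgroup.m_inv_closed[OF sub, of "e a \<otimes> inv g \<otimes> inv (e b)"] by auto
qed

lemma sg_inv: assumes a: "a < k" and b: "b < k" and g: "g \<in> carrier G" and p: "pi g b = a"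
  shows "sg (inv g) a = inv (sg g b)"
proof -
  have pa: "pi (inv g) a = b" using pi_inv[OF a b g] p by simp
  have 1: "sg g b = e b \<otimes> g \<otimes> inv (e a)"
    using e_pi[OF b g] p by (simp add: sg_def)
  have 2: "sg (inv g) a = e a \<otimes> inv g \<otimes> inv (e b)"
    using e_pi[OF a inv_closed[OF g]] pa by (simp add: sg_def)
  show ?thesis unfolding 1 2 using a b g by (simp add: inv_mult_group m_assoc)
qed

lemma f_carrier[simp]: "g \<in> carrier G \<Longrightarrow> f g \<in> carrier_mat n n"
  using unit by (simp add: unitary_mat_def)

lemma f_adj: "g \<in> carrier G \<Longrightarrow> mat_adjoint (f g) * f g = 1\<^sub>m n"
  using unit by (simp add: unitary_mat_def)

lemma f_dims[simp]: assumes "g \<in> carrier G" shows "dim_row (f g) = n" "dim_col (f g) = n"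
  using carrier_matD[OF f_carrier[OF assms]] by auto

lemma f_one: "f \<one> = 1\<^sub>m n"
proof -
  have ff: "f \<one> = f \<one> * f \<one>" using mulS[of \<one> \<one>] subgroup.one_closed[OF sub] by simp
  have "1\<^sub>m n = mat_adjoint (f \<one>) * f \<one>" using f_adj[OF one_closed] by simp
  also have "\<dots> = mat_adjoint (f \<one>) * (f \<one> * f \<one>)" by (simp only: ff[symmetric])
  also have "\<dots> = (mat_adjoint (f \<one>) * f \<one>) * f \<one>"
    using assoc_mult_mat[of "mat_adjoint (f \<one>)" n n "f \<one>" n "f \<one>" n] by simp
  also have "\<dots> = f \<one>" using f_adj[OF one_closed] by simp
  finally show ?thesis by simp
qed

lemma f_inv: assumes s: "s \<in> S" shows "f (inv s) = mat_adjoint (f s)"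
proof -
  have sc: "s \<in> carrier G" using S_carr s .
  have ff: "f s * f (inv s) = 1\<^sub>m n" using mulS[of s "inv s"] sc s f_one by simp
  have "f (inv s) = (mat_adjoint (f s) * f s) * f (inv s)" using f_adj[OF sc] sc by simp
  also have "\<dots> = mat_adjoint (f s) * (f s * f (inv s))"
    using assoc_mult_mat[of "mat_adjoint (f s)" n n "f s" n "f (inv s)" n] sc by simp
  also have "\<dots> = mat_adjoint (f s)" using ff sc by simp
  finally show ?thesis .
qed

definition phi where "phi g = pmat k n (pi g) (\<lambda>a. f (sg g a))"

lemma phi_carrier[simp]: "phi g \<in> carrier_mat (k*n) (k*n)" by (simp add: phi_def)

lemma phi_dims[simp]: "dim_row (phi g) = k*n" "dim_col (phi g) = k*n" by (simp_all add: phi_def)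

lemma phi_mult: assumes g: "g \<in> carrier G" and h: "h \<in> carrier G"
  shows "phi g * phi h = phi (g \<otimes> h)"
proof -
  have "phi g * phi h = pmat k n (\<lambda>a. pi h (pi g a)) (\<lambda>a. f (sg g a) * f (sg h (pi g a)))"
    unfolding phi_def using g h by (intro pmat_mult_pmat) (auto simp: pi_lt)
  also have "\<dots> = phi (g \<otimes> h)" unfolding phi_def
  proof (rule pmat_cong)
    fix a assume a: "a < k"
    show "pi h (pi g a) = pi (g \<otimes> h) a" using pi_mult a g h by simp
    show "f (sg g a) * f (sg h (pi g a)) = f (sg (g \<otimes> h) a)"
      using mulS[OF sg_S[OF a g], of "sg h (pi g a)"] sg_mult[OF a g h] pi_lt[OF a g] h by simp
  qed
  finally show ?thesis .
qed

lemma phi_one: "phi \<one> = 1\<^sub>m (k*n)"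
proof -
  have "phi \<one> = pmat k n (\<lambda>a. a) (\<lambda>a. 1\<^sub>m n)" unfolding phi_def
  proof (rule pmat_cong)
    fix a assume a: "a < k"
    show "pi \<one> a = a" using a by (simp add: pi_def)
    show "f (sg \<one> a) = 1\<^sub>m n" using a f_one by (simp add: sg_def)
  qed
  then show ?thesis using pmat_id by simp
qed

lemma phi_inv: assumes g: "g \<in> carrier G" shows "phi (inv g) = mat_adjoint (phi g)"
proof (rule eq_matI)
  fix i j assume "i < dim_row (mat_adjoint (phi g))" "j < dim_col (mat_adjoint (phi g))"
  then have ij: "i < k*n" "j < k*n" by auto
  define a where "a = i div n"
  define b where "b = j div n"
  have ab: "a < k" "b < k" using ij div_lt a_def b_def by auto
  have mm: "i mod n < n" "j mod n < n" using ij mod_lt by auto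
  have "mat_adjoint (phi g) $$ (i,j) = cnj (phi g $$ (j,i))" using ij by simp
  also have "\<dots> = (if a = pi g b then cnj (f (sg g b) $$ (j mod n, i mod n)) else 0)"
    using ij by (cases "a = pi g b") (simp_all add: phi_def pmat_def a_def b_def)
  also have "\<dots> = (if b = pi (inv g) a then f (sg (inv g) a) $$ (i mod n, j mod n) else 0)"
  proof (cases "a = pi g b")
    case True
    then have "pi (inv g) a = b" using pi_inv[OF ab(1) ab(2) g] by simp
    moreover have "f (sg (inv g) a) = mat_adjoint (f (sg g b))"
      using sg_inv[OF ab(1) ab(2) g True[symmetric]] f_inv[OF sg_S[OF ab(2) g]] by simp
    ultimately show ?thesis using True mm ab g by simp
  next
    case False
    then have "pi (inv g) a \<noteq> b" using pi_inv[OF ab(1) ab(2) g] by auto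
    then show ?thesis using False by auto
  qed
  also have "\<dots> = phi (inv g) $$ (i,j)"
    using ij by (simp add: phi_def pmat_def a_def b_def)
  finally show "phi (inv g) $$ (i,j) = mat_adjoint (phi g) $$ (i,j)" by simp
qed (simp_all add: phi_def)

lemma phi_unitary: assumes g: "g \<in> carrier G" shows "unitary_mat (k*n) (phi g)"
  unfolding unitary_mat_def
  using phi_mult[of "inv g" g] phi_mult[of g "inv g"] phi_inv[OF g] phi_one g by simp

lemma phi_rep: "unitary_rep G (k*n) phi"
  unfolding unitary_rep_def using phi_unitary phi_mult by simp

end



context ictx begin

definition cc where "cc = complex_of_real (1 / sqrt (real k))"

lemma cc_sq: "cnj cc * cc = 1 / of_nat k"
proof -
  have r: "(1 / sqrt (real k)) * (1 / sqrt (real k)) = 1 / real k" using k_pos by simp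
  have "cnj cc * cc = complex_of_real (1 / sqrt (real k)) * complex_of_real (1 / sqrt (real k))"
    by (simp add: cc_def)
  also have "\<dots> = complex_of_real ((1 / sqrt (real k)) * (1 / sqrt (real k)))"
    by (simp only: of_real_mult)
  also have "\<dots> = complex_of_real (1 / real k)" by (simp only: r)
  also have "\<dots> = 1 / of_nat k" by simp
  finally show ?thesis .
qed

lemma fmul_carrier[simp]: assumes "g \<in> carrier G" "h \<in> carrier G" shows "f g * f h \<in> carrier_mat n n"
  using mult_carrier_mat[OF f_carrier[OF assms(1)] f_carrier[OF assms(2)]] .

definition V where "V = colb k n n (\<lambda>a. cc \<cdot>\<^sub>m f (e a))"

lemma V_iso: "isometry_mat (k*n) n V"
proof -
  have "mat_adjoint V * V = mat n n (\<lambda>(i,j). \<Sum>a<k. (mat_adjoint (cc \<cdot>\<^sub>m f (e a)) * (cc \<cdot>\<^sub>m f (e a))) $$ (i,j))"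
    unfolding V_def by (rule colb_gram) simp
  also have "\<dots> = 1\<^sub>m n"
  proof (rule eq_matI)
    fix i j assume "i < dim_row (1\<^sub>m n)" "j < dim_col (1\<^sub>m n)"
    then have ij: "i < n" "j < n" by auto
    have "(\<Sum>a<k. (mat_adjoint (cc \<cdot>\<^sub>m f (e a)) * (cc \<cdot>\<^sub>m f (e a))) $$ (i,j)) = (\<Sum>a<k. (1 / of_nat k) * 1\<^sub>m n $$ (i,j))"
    proof (intro sum.cong refl)
      fix a assume "a \<in> {..<k}"
      then have a: "a < k" by simp
      show "(mat_adjoint (cc \<cdot>\<^sub>m f (e a)) * (cc \<cdot>\<^sub>m f (e a))) $$ (i,j) = (1 / of_nat k) * 1\<^sub>m n $$ (i,j)"
        using gram_smult[OF f_carrier[OF e_carrier[OF a]], of cc] f_adj[OF e_carrier[OF a]] cc_sq ij by simp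
    qed
    also have "\<dots> = 1\<^sub>m n $$ (i,j)" using k_pos by simp
    finally show "mat n n (\<lambda>(i,j). \<Sum>a<k. (mat_adjoint (cc \<cdot>\<^sub>m f (e a)) * (cc \<cdot>\<^sub>m f (e a))) $$ (i,j)) $$ (i,j) = 1\<^sub>m n $$ (i,j)"
      using ij by simp
  qed auto
  moreover have "V \<in> carrier_mat (k*n) n" unfolding V_def by simp
  ultimately show ?thesis unfolding isometry_mat_def by simp
qed

definition X where "X g a = f (e a) * f g - f (e a \<otimes> g)"

lemma X_carrier[simp]: "a < k \<Longrightarrow> g \<in> carrier G \<Longrightarrow> X g a \<in> carrier_mat n n"
  unfolding X_def by (auto intro!: minus_carrier_mat)

lemma D_eq: assumes g: "g \<in> carrier G"
  shows "V * f g - phi g * V = colb k n n (\<lambda>a. cc \<cdot>\<^sub>m X g a)"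
proof -
  have 1: "V * f g = colb k n n (\<lambda>a. (cc \<cdot>\<^sub>m f (e a)) * f g)"
    unfolding V_def using g by (intro colb_mult) auto
  also have "\<dots> = colb k n n (\<lambda>a. cc \<cdot>\<^sub>m (f (e a) * f g))"
    using g by (intro colb_cong) (simp add: mult_smult_assoc_mat[of _ n n _ n])
  finally have 1: "V * f g = colb k n n (\<lambda>a. cc \<cdot>\<^sub>m (f (e a) * f g))" .
  have "phi g * V = colb k n n (\<lambda>a. f (sg g a) * (cc \<cdot>\<^sub>m f (e (pi g a))))"
    unfolding phi_def V_def using g by (intro pmat_mult_colb) (auto simp: pi_lt)
  also have "\<dots> = colb k n n (\<lambda>a. cc \<cdot>\<^sub>m f (e a \<otimes> g))"
  proof (rule colb_cong)
    fix a assume a: "a < k"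
    have "f (sg g a) * (cc \<cdot>\<^sub>m f (e (pi g a))) = cc \<cdot>\<^sub>m (f (sg g a) * f (e (pi g a)))"
      using a g pi_lt[OF a g] by (simp add: mult_smult_distrib[of _ n n _ n])
    also have "f (sg g a) * f (e (pi g a)) = f (e a \<otimes> g)"
      using mulS[OF sg_S[OF a g], of "e (pi g a)"] sg_e[OF a g] pi_lt[OF a g] by simp
    finally show "f (sg g a) * (cc \<cdot>\<^sub>m f (e (pi g a))) = cc \<cdot>\<^sub>m f (e a \<otimes> g)" .
  qed
  finally have 2: "phi g * V = colb k n n (\<lambda>a. cc \<cdot>\<^sub>m f (e a \<otimes> g))" .
  have "V * f g - phi g * V = colb k n n (\<lambda>a. cc \<cdot>\<^sub>m (f (e a) * f g) - cc \<cdot>\<^sub>m f (e a \<otimes> g))"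
    unfolding 1 2 using g by (intro colb_minus) auto
  also have "\<dots> = colb k n n (\<lambda>a. cc \<cdot>\<^sub>m X g a)"
  proof (rule colb_cong)
    fix a assume a: "a < k"
    have c1: "f (e a) * f g \<in> carrier_mat n n" using a g by simp
    have c2: "f (e a \<otimes> g) \<in> carrier_mat n n" using a g by simp
    show "cc \<cdot>\<^sub>m (f (e a) * f g) - cc \<cdot>\<^sub>m f (e a \<otimes> g) = cc \<cdot>\<^sub>m X g a"
      unfolding X_def by (rule smult_minus[OF c1 c2])
  qed
  finally show ?thesis .
qed

lemma tr_D: assumes g: "g \<in> carrier G" and rho: "\<rho> \<in> carrier_mat n n"
  shows "mtrace (mat_adjoint (V * f g - phi g * V) * (V * f g - phi g * V) * \<rho>) =
    (\<Sum>a<k. mtrace (mat_adjoint (X g a) * X g a * \<rho>) / of_nat k)"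
proof -
  have gramD: "mat_adjoint (V * f g - phi g * V) * (V * f g - phi g * V) =
     mat n n (\<lambda>(i,j). \<Sum>a<k. (mat_adjoint (cc \<cdot>\<^sub>m X g a) * (cc \<cdot>\<^sub>m X g a)) $$ (i,j))"
    unfolding D_eq[OF g] using g by (intro colb_gram) simp
  have Qc: "mat_adjoint (cc \<cdot>\<^sub>m X g a) * (cc \<cdot>\<^sub>m X g a) \<in> carrier_mat n n" if "a \<in> {..<k}" for a
  proof -
    have a: "a < k" using that by simp
    have xc: "cc \<cdot>\<^sub>m X g a \<in> carrier_mat n n" using X_carrier[OF a g] by simp
    show ?thesis using mult_carrier_mat[OF adj_carrier[OF xc] xc] .
  qed
  have "mtrace (mat_adjoint (V * f g - phi g * V) * (V * f g - phi g * V) * \<rho>) =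
     mtrace (mat n n (\<lambda>(i,j). \<Sum>a<k. (mat_adjoint (cc \<cdot>\<^sub>m X g a) * (cc \<cdot>\<^sub>m X g a)) $$ (i,j)) * \<rho>)"
    using gramD by simp
  also have "\<dots> = (\<Sum>a<k. mtrace ((mat_adjoint (cc \<cdot>\<^sub>m X g a) * (cc \<cdot>\<^sub>m X g a)) * \<rho>))"
    by (rule mtrace_sum[where Q="\<lambda>a. mat_adjoint (cc \<cdot>\<^sub>m X g a) * (cc \<cdot>\<^sub>m X g a)", OF Qc rho finite_lessThan])
  also have "\<dots> = (\<Sum>a<k. mtrace (mat_adjoint (X g a) * X g a * \<rho>) / of_nat k)"
  proof (intro sum.cong refl)
    fix a assume "a \<in> {..<k}"
    then have a: "a < k" by simp
    have "mtrace ((mat_adjoint (cc \<cdot>\<^sub>m X g a) * (cc \<cdot>\<^sub>m X g a)) * \<rho>) =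
       mtrace (((cnj cc * cc) \<cdot>\<^sub>m (mat_adjoint (X g a) * X g a)) * \<rho>)"
      using gram_smult[OF X_carrier[OF a g]] by simp
    also have "\<dots> = (cnj cc * cc) * mtrace (mat_adjoint (X g a) * X g a * \<rho>)"
      using mult_carrier_mat[OF adj_carrier[OF X_carrier[OF a g]] X_carrier[OF a g]] rho by (rule mtrace_smult)
    finally show "mtrace ((mat_adjoint (cc \<cdot>\<^sub>m X g a) * (cc \<cdot>\<^sub>m X g a)) * \<rho>) =
       mtrace (mat_adjoint (X g a) * X g a * \<rho>) / of_nat k" using cc_sq by simp
  qed
  finally show ?thesis .
qed

definition z where "z \<rho> g t = (rho_norm \<rho> (f t * f g - f (t \<otimes> g)))\<^sup>2"

lemma z_crep: assumes h: "h \<in> carrier G" and g: "g \<in> carrier G"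
  shows "z \<rho> g h = z \<rho> g (crep G S h)"
proof -
  define q where "q = h \<otimes> inv (crep G S h)"
  have q: "q \<in> S" unfolding q_def using crep_quot h .
  have qc: "q \<in> carrier G" using S_carr q .
  have c: "crep G S h \<in> carrier G" using h by simp
  have hq: "q \<otimes> crep G S h = h" unfolding q_def using h c by simp
  have hg: "q \<otimes> (crep G S h \<otimes> g) = h \<otimes> g" using hq c qc g by (simp add: m_assoc[symmetric])
  have 1: "f h = f q * f (crep G S h)" using mulS[OF q c] hq by simp
  have 2: "f (h \<otimes> g) = f q * f (crep G S h \<otimes> g)" using mulS[OF q, of "crep G S h \<otimes> g"] hg c g by simp
  have "f h * f g - f (h \<otimes> g) = f q * (f (crep G S h) * f g) - f q * f (crep G S h \<otimes> g)"
    unfolding 1 2 using qc c g by (simp add: assoc_mult_mat[of _ n n _ n _ n])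
  also have "\<dots> = f q * (f (crep G S h) * f g - f (crep G S h \<otimes> g))"
    using qc c g by (simp add: mult_minus_distrib_mat[of _ n n _ n])
  finally have "f h * f g - f (h \<otimes> g) = f q * (f (crep G S h) * f g - f (crep G S h \<otimes> g))" .
  moreover have "f (crep G S h) * f g - f (crep G S h \<otimes> g) \<in> carrier_mat n n"
    using c g by (intro minus_carrier_mat) simp
  ultimately show ?thesis unfolding z_def
    using rho_norm_unitary[OF unit[OF qc], of "f (crep G S h) * f g - f (crep G S h \<otimes> g)" n \<rho>]
    by simp
qed

lemma S_fin: "finite S" using finite_subset[OF S_sub fin] .

lemma S_card_pos: "0 < card S"
  using S_fin subgroup.one_closed[OF sub] by (auto simp: card_gt_0_iff)

lemma fiber_card: assumes t: "t \<in> R"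
  shows "card {x. x \<in> carrier G \<and> crep G S x = t} = card S"
proof -
  have tc: "t \<in> carrier G" and tt: "crep G S t = t" using R_crep[OF t] by auto
  have "{x. x \<in> carrier G \<and> crep G S x = t} = S #> t"
  proof (rule equalityI; rule subsetI)
    fix x assume "x \<in> {x. x \<in> carrier G \<and> crep G S x = t}"
    then have x: "x \<in> carrier G" "crep G S x = crep G S t" using tt by auto
    then have "x \<otimes> inv t \<in> S" using crep_eq_iff[OF x(1) tc] by simp
    then show "x \<in> S #> t" using subgroup.rcos_module[OF sub is_group tc x(1)] by simp
  next
    fix x assume x: "x \<in> S #> t"
    then have xc: "x \<in> carrier G" using subsetD[OF r_coset_subset_G[OF S_sub tc] x] by simp
    then have "x \<otimes> inv t \<in> S" using subgroup.rcos_module[OF sub is_group tc xc] x by simp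
    then have "crep G S x = crep G S t" using crep_eq_iff[OF xc tc] by simp
    then show "x \<in> {x. x \<in> carrier G \<and> crep G S x = t}" using xc tt by simp
  qed
  moreover obtain h where h: "bij_betw h S (S #> t)"
    using card_cosets_equal[OF rcosetsI[OF S_sub tc] S_sub] by blast
  ultimately show ?thesis using bij_betw_same_card[OF h] by simp
qed

lemma sum_fiber: "(\<Sum>h\<in>carrier G. F (crep G S h)) = of_nat (card S) * (\<Sum>t\<in>R. F t :: real)"
proof -
  have "(\<Sum>h\<in>carrier G. F (crep G S h)) = (\<Sum>t\<in>R. \<Sum>h\<in>{x. x \<in> carrier G \<and> crep G S x = t}. F (crep G S h))"
    using sum.group[OF fin R_fin subset_refl, of "\<lambda>h. F (crep G S h)"] by simp
  also have "\<dots> = (\<Sum>t\<in>R. of_nat (card S) * F t)"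
  proof (intro sum.cong refl)
    fix t assume t: "t \<in> R"
    have "(\<Sum>h\<in>{x. x \<in> carrier G \<and> crep G S x = t}. F (crep G S h)) = (\<Sum>h\<in>{x. x \<in> carrier G \<and> crep G S x = t}. F t)"
      by (intro sum.cong refl) auto
    also have "\<dots> = of_nat (card S) * F t" using fiber_card[OF t] by simp
    finally show "(\<Sum>h\<in>{x. x \<in> carrier G \<and> crep G S x = t}. F (crep G S h)) = of_nat (card S) * F t" .
  qed
  finally show ?thesis by (simp add: sum_distrib_left)
qed

lemma card_G: "real (card (carrier G)) = real (card S) * real k"
  using sum_fiber[of "\<lambda>_. 1"] R_card by simp

lemma norm_bound: assumes rho: "\<rho> \<in> carrier_mat n n" and g: "g \<in> carrier G"
  and H: "(1 / real (card (carrier G))) * (\<Sum>h\<in>carrier G. (rho_norm \<rho> (f h * f g - f (h \<otimes> g)))\<^sup>2) \<le> \<epsilon>"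
  shows "(rho_norm \<rho> (V * f g - phi g * V))\<^sup>2 \<le> \<epsilon>"
proof -
  let ?w = "\<lambda>a. Re (mtrace (mat_adjoint (X g a) * X g a * \<rho>))"
  have "(rho_norm \<rho> (V * f g - phi g * V))\<^sup>2 = \<bar>\<Sum>a<k. ?w a / real k\<bar>"
    unfolding rho_norm_sq tr_D[OF g rho] by (simp add: Re_sum)
  also have "\<dots> \<le> (\<Sum>a<k. \<bar>?w a / real k\<bar>)" by (rule sum_abs)
  also have "\<dots> = (\<Sum>a<k. z \<rho> g (e a) / real k)"
    by (intro sum.cong refl) (simp add: z_def rho_norm_sq X_def)
  also have "\<dots> = (\<Sum>a<k. z \<rho> g (e a)) / real k" by (simp add: sum_divide_distrib)
  also have "(\<Sum>a<k. z \<rho> g (e a)) = (\<Sum>t\<in>R. z \<rho> g t)"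
    by (rule sum.reindex_bij_betw[OF bij])
  also have "(\<Sum>t\<in>R. z \<rho> g t) / real k = (\<Sum>h\<in>carrier G. z \<rho> g (crep G S h)) / real (card (carrier G))"
  proof -
    have p1: "real (card S) > 0" using S_card_pos by simp
    have p2: "real k > 0" using k_pos by simp
    have e1: "(\<Sum>h\<in>carrier G. z \<rho> g (crep G S h)) = real (card S) * (\<Sum>t\<in>R. z \<rho> g t)"
      by (rule sum_fiber)
    have e3: "real (card S) * (\<Sum>t\<in>R. z \<rho> g t) / (real (card S) * real k) = (\<Sum>t\<in>R. z \<rho> g t) / real k"
      by (rule nonzero_mult_divide_mult_cancel_left) (use p1 in simp)
    show ?thesis unfolding e1 card_G by (rule e3[symmetric])
  qed
  also have "(\<Sum>h\<in>carrier G. z \<rho> g (crep G S h)) = (\<Sum>h\<in>carrier G. z \<rho> g h)"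
  proof (intro sum.cong refl)
    fix h assume "h \<in> carrier G"
    then show "z \<rho> g (crep G S h) = z \<rho> g h" by (rule z_crep[OF _ g, symmetric])
  qed
  also have "(\<Sum>h\<in>carrier G. z \<rho> g h) / real (card (carrier G)) =
      (1 / real (card (carrier G))) * (\<Sum>h\<in>carrier G. z \<rho> g h)" by simp
  also have "\<dots> \<le> \<epsilon>"
    using H by (simp add: z_def)
  finally show ?thesis .
qed

end



lemma bd_carrier: "(\<forall>(k,\<eta>)\<in>set cs. \<eta> g \<in> carrier_mat k k) \<Longrightarrow>
  block_diag (map (\<lambda>(k,\<eta>). \<eta> g) cs) \<in> carrier_mat (sum_list (map fst cs)) (sum_list (map fst cs))"
proof (induction cs)
  case Nil then show ?case by simp
next
  case (Cons p cs)
  obtain k0 \<eta>0 where p: "p = (k0, \<eta>0)" by (cases p)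
  have A: "\<eta>0 g \<in> carrier_mat k0 k0" using Cons.prems p by auto
  have B: "block_diag (map (\<lambda>(k,\<eta>). \<eta> g) cs) \<in> carrier_mat (sum_list (map fst cs)) (sum_list (map fst cs))"
    using Cons by auto
  show ?case using A B p by (auto intro!: four_block_carrier_mat)
qed

lemma bd_cons: assumes "\<eta>0 g \<in> carrier_mat k0 k0"
  "block_diag (map (\<lambda>(k,\<eta>). \<eta> g) cs) \<in> carrier_mat N N"
  shows "block_diag (map (\<lambda>(k,\<eta>). \<eta> g) ((k0,\<eta>0) # cs)) =
    four_block_mat (\<eta>0 g) (0\<^sub>m k0 N) (0\<^sub>m N k0) (block_diag (map (\<lambda>(k,\<eta>). \<eta> g) cs))"
  using assms by auto

lemma bd_block:
  assumes "(d,\<xi>) \<in> set cs"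
  shows "\<exists>ofs. ofs + d \<le> sum_list (map fst cs) \<and> (\<forall>g. (\<forall>(k,\<eta>)\<in>set cs. \<eta> g \<in> carrier_mat k k) \<longrightarrow>
     (\<forall>i j. i < sum_list (map fst cs) \<longrightarrow> j < d \<longrightarrow>
       block_diag (map (\<lambda>(k,\<eta>). \<eta> g) cs) $$ (i, ofs+j) = (if ofs \<le> i \<and> i < ofs + d then \<xi> g $$ (i - ofs, j) else 0)))"
  using assms
proof (induction cs)
  case Nil then show ?case by simp
next
  case (Cons p cs)
  obtain k0 \<eta>0 where p: "p = (k0, \<eta>0)" by (cases p)
  let ?N = "sum_list (map fst cs)"
  have prep: "\<And>g. (\<forall>(k,\<eta>)\<in>set (p#cs). \<eta> g \<in> carrier_mat k k) \<Longrightarrow>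
     \<eta>0 g \<in> carrier_mat k0 k0 \<and> block_diag (map (\<lambda>(k,\<eta>). \<eta> g) cs) \<in> carrier_mat ?N ?N \<and>
     (\<forall>(k,\<eta>)\<in>set cs. \<eta> g \<in> carrier_mat k k)"
    using p bd_carrier by auto
  show ?case
  proof (cases "(d,\<xi>) = (k0,\<eta>0)")
    case True
    then have dk: "d = k0" "\<xi> = \<eta>0" by auto
    show ?thesis
    proof (intro exI[of _ 0] conjI allI impI)
      show "0 + d \<le> sum_list (map fst (p # cs))" using p dk by simp
      fix g i j assume cg: "\<forall>(k,\<eta>)\<in>set (p#cs). \<eta> g \<in> carrier_mat k k"
        and i: "i < sum_list (map fst (p # cs))" and j: "j < d"
      have A: "\<eta>0 g \<in> carrier_mat k0 k0" and B: "block_diag (map (\<lambda>(k,\<eta>). \<eta> g) cs) \<in> carrier_mat ?N ?N"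
        using prep[OF cg] by auto
      have i': "i < k0 + ?N" using i p by simp
      show "block_diag (map (\<lambda>(k,\<eta>). \<eta> g) (p#cs)) $$ (i, 0 + j) = (if 0 \<le> i \<and> i < 0 + d then \<xi> g $$ (i - 0, j) else 0)"
        unfolding p bd_cons[of \<eta>0 g k0 cs "sum_list (map fst cs)", OF A B] using A B i' j dk by auto
    qed
  next
    case False
    then have "(d,\<xi>) \<in> set cs" using Cons.prems p by auto
    from Cons.IH[OF this] obtain ofs where ofs: "ofs + d \<le> ?N" and H: "\<forall>g. (\<forall>(k,\<eta>)\<in>set cs. \<eta> g \<in> carrier_mat k k) \<longrightarrow>
     (\<forall>i j. i < ?N \<longrightarrow> j < d \<longrightarrow>
       block_diag (map (\<lambda>(k,\<eta>). \<eta> g) cs) $$ (i, ofs+j) = (if ofs \<le> i \<and> i < ofs + d then \<xi> g $$ (i - ofs, j) else 0))"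
      by blast
    show ?thesis
    proof (intro exI[of _ "k0 + ofs"] conjI allI impI)
      show "k0 + ofs + d \<le> sum_list (map fst (p # cs))" using ofs p by simp
      fix g i j assume cg: "\<forall>(k,\<eta>)\<in>set (p#cs). \<eta> g \<in> carrier_mat k k"
        and i: "i < sum_list (map fst (p # cs))" and j: "j < d"
      have A: "\<eta>0 g \<in> carrier_mat k0 k0" and B: "block_diag (map (\<lambda>(k,\<eta>). \<eta> g) cs) \<in> carrier_mat ?N ?N"
        and cg': "\<forall>(k,\<eta>)\<in>set cs. \<eta> g \<in> carrier_mat k k"
        using prep[OF cg] by auto
      have i': "i < k0 + ?N" using i p by simp
      have Hi: "block_diag (map (\<lambda>(k,\<eta>). \<eta> g) cs) $$ (i, ofs+j) = (if ofs \<le> i \<and> i < ofs + d then \<xi> g $$ (i - ofs, j) else 0)"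
        if "i < ?N" for i
      proof -
        have Hg: "\<forall>i j. i < ?N \<longrightarrow> j < d \<longrightarrow>
          block_diag (map (\<lambda>(k,\<eta>). \<eta> g) cs) $$ (i, ofs+j) = (if ofs \<le> i \<and> i < ofs + d then \<xi> g $$ (i - ofs, j) else 0)"
          using mp[OF spec[OF H, of g] cg'] .
        show ?thesis using Hg that j by blast
      qed
      show "block_diag (map (\<lambda>(k,\<eta>). \<eta> g) (p#cs)) $$ (i, k0 + ofs + j) = (if k0 + ofs \<le> i \<and> i < k0 + ofs + d then \<xi> g $$ (i - (k0 + ofs), j) else 0)"
      proof (cases "i < k0")
        case True
        then show ?thesis unfolding p bd_cons[of \<eta>0 g k0 cs "sum_list (map fst cs)", OF A B] using A B i' j ofs by auto
      next
        case False
        then have "block_diag (map (\<lambda>(k,\<eta>). \<eta> g) (p#cs)) $$ (i, k0 + ofs + j) =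
            block_diag (map (\<lambda>(k,\<eta>). \<eta> g) cs) $$ (i - k0, ofs + j)"
          unfolding p bd_cons[of \<eta>0 g k0 cs "sum_list (map fst cs)", OF A B] using A B i' j ofs by auto
        also have "\<dots> = (if ofs \<le> i - k0 \<and> i - k0 < ofs + d then \<xi> g $$ (i - k0 - ofs, j) else 0)"
        proof -
          have "i - k0 < ?N" using i' False by simp
          then show ?thesis by (rule Hi)
        qed
        also have "\<dots> = (if k0 + ofs \<le> i \<and> i < k0 + ofs + d then \<xi> g $$ (i - (k0 + ofs), j) else 0)"
          using False by (auto simp: diff_diff_add)
        finally show ?thesis .
      qed
    qed
  qed
qed

context ictx begin

lemma fourier_ok: assumes irr: "irr_component G (k*n) phi d \<xi>"
  shows "fourier S n f d \<xi> \<noteq> 0\<^sub>m (n*d) (n*d)"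
proof
  assume F0: "fourier S n f d \<xi> = 0\<^sub>m (n*d) (n*d)"
  define m where "m = k*n"
  obtain comps U where ir: "\<forall>(k', \<eta>)\<in>set comps. irreducible_rep G k' \<eta>" and U: "unitary_mat m U"
    and BD: "\<forall>g\<in>carrier G. U * phi g * mat_adjoint U = block_diag (map (\<lambda>(k', \<eta>). \<eta> g) comps)"
    and mem: "(d, \<xi>) \<in> set comps"
    using irr unfolding irr_component_def m_def by blast
  have carr: "\<And>g. g \<in> carrier G \<Longrightarrow> \<forall>(k', \<eta>)\<in>set comps. \<eta> g \<in> carrier_mat k' k'"
    using ir by (auto simp: irreducible_rep_def unitary_rep_def unitary_mat_def)
  have irx: "irreducible_rep G d \<xi>" using ir mem by auto
  have xi: "\<And>g. g \<in> carrier G \<Longrightarrow> \<xi> g \<in> carrier_mat d d"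
    and xiu: "\<And>g. g \<in> carrier G \<Longrightarrow> \<xi> g * mat_adjoint (\<xi> g) = 1\<^sub>m d"
    and dpos: "0 < d"
    using irx by (auto simp: irreducible_rep_def unitary_rep_def unitary_mat_def)
  let ?N = "sum_list (map fst comps)"
  let ?B = "\<lambda>g. block_diag (map (\<lambda>(k', \<eta>). \<eta> g) comps)"
  obtain ofs where ofs: "ofs + d \<le> ?N" and blk: "\<forall>g. (\<forall>(k',\<eta>)\<in>set comps. \<eta> g \<in> carrier_mat k' k') \<longrightarrow>
     (\<forall>i j. i < ?N \<longrightarrow> j < d \<longrightarrow> ?B g $$ (i, ofs+j) = (if ofs \<le> i \<and> i < ofs + d then \<xi> g $$ (i - ofs, j) else 0))"
    using bd_block[OF mem] by blast
  have Uc1: "U \<in> carrier_mat m m" using U by (simp add: unitary_mat_def)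
  have Uc: "U \<in> carrier_mat m m" "mat_adjoint U \<in> carrier_mat m m" "U * mat_adjoint U = 1\<^sub>m m" "mat_adjoint U * U = 1\<^sub>m m"
    using U adj_carrier[OF Uc1] by (auto simp: unitary_mat_def)
  have Pc: "\<And>g. phi g \<in> carrier_mat m m" by (simp add: m_def)
  have Bc: "?B g \<in> carrier_mat ?N ?N" if g: "g \<in> carrier G" for g using bd_carrier[OF carr[OF g]] .
  have "U * phi \<one> * mat_adjoint U \<in> carrier_mat m m"
    using mult_carrier_mat[OF mult_carrier_mat[OF Uc(1) Pc] Uc(2)] .
  then have B1: "?B \<one> \<in> carrier_mat m m" using BD by simp
  have Nm: "?N = m" using carrier_matD(1)[OF B1] carrier_matD(1)[OF Bc[OF one_closed]] by simp
  define E where "E = mat m d (\<lambda>(i,j). if i = ofs + j then 1 else (0::complex))"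
  have Ec: "E \<in> carrier_mat m d" by (simp add: E_def)
  have BE: "?B g * E = E * \<xi> g" if g: "g \<in> carrier G" for g
  proof (rule eq_matI)
    fix i j assume "i < dim_row (E * \<xi> g)" "j < dim_col (E * \<xi> g)"
    then have ij: "i < m" "j < d" using Ec xi[OF g] by auto
    have oj: "ofs + j < m" using ofs Nm ij by simp
    have "(?B g * E) $$ (i,j) = (\<Sum>l<m. ?B g $$ (i,l) * E $$ (l,j))"
      using Bc[OF g] Nm Ec ij by (simp add: mult_entry)
    also have "\<dots> = (\<Sum>l<m. if l = ofs + j then ?B g $$ (i,l) else 0)"
      using ij by (intro sum.cong refl) (auto simp: E_def)
    also have "\<dots> = ?B g $$ (i, ofs+j)" using oj by simp
    also have "\<dots> = (if ofs \<le> i \<and> i < ofs + d then \<xi> g $$ (i - ofs, j) else 0)"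
    proof -
      have Hg: "\<forall>i j. i < ?N \<longrightarrow> j < d \<longrightarrow> ?B g $$ (i, ofs+j) = (if ofs \<le> i \<and> i < ofs + d then \<xi> g $$ (i - ofs, j) else 0)"
        using mp[OF spec[OF blk, of g] carr[OF g]] .
      have "i < ?N" using ij Nm by simp
      then show ?thesis using Hg ij by blast
    qed
    also have "\<dots> = (\<Sum>l<d. E $$ (i,l) * \<xi> g $$ (l,j))"
    proof (cases "ofs \<le> i \<and> i < ofs + d")
      case True
      have "(\<Sum>l<d. E $$ (i,l) * \<xi> g $$ (l,j)) = (\<Sum>l<d. if l = i - ofs then \<xi> g $$ (l,j) else 0)"
        using ij True by (intro sum.cong refl) (auto simp: E_def)
      also have "\<dots> = \<xi> g $$ (i - ofs, j)"
      proof -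
        have "i - ofs < d" using True by linarith
        then show ?thesis by simp
      qed
      finally show ?thesis using True by simp
    next
      case False
      have "(\<Sum>l<d. E $$ (i,l) * \<xi> g $$ (l,j)) = (\<Sum>l<d. 0)"
        using ij False by (intro sum.cong refl) (auto simp: E_def)
      moreover have "(if ofs \<le> i \<and> i < ofs + d then \<xi> g $$ (i - ofs, j) else 0) = 0"
        using False by (simp only: if_False)
      ultimately show ?thesis by simp
    qed
    also have "\<dots> = (E * \<xi> g) $$ (i,j)" using Ec xi[OF g] ij by (simp add: mult_entry)
    finally show "(?B g * E) $$ (i,j) = (E * \<xi> g) $$ (i,j)" .
  qed (use Bc[OF g] Nm Ec xi[OF g] in auto)
  define W where "W = mat_adjoint U * E"
  have Wc: "W \<in> carrier_mat m d" unfolding W_def using mult_carrier_mat[OF Uc(2) Ec] .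
  have cancelU: "mat_adjoint U * (U * Y) = Y" if Y: "Y \<in> carrier_mat m w" for Y w
    using assoc_mult_mat[OF Uc(2) Uc(1) Y] Uc(4) Y by simp
  have UW: "U * W = E"
    unfolding W_def using assoc_mult_mat[OF Uc(1) Uc(2) Ec] Uc(3) Ec by simp
  have inter: "phi g * W = W * \<xi> g" if g: "g \<in> carrier G" for g
  proof -
    have "U * (phi g * W) = (U * phi g * mat_adjoint U) * E"
      using assoc_mult_mat[OF mult_carrier_mat[OF Uc(1) Pc] Uc(2) Ec]
          assoc_mult_mat[OF Uc(1) Pc Wc] unfolding W_def by simp
    also have "\<dots> = E * \<xi> g" using BD g BE by simp
    also have "\<dots> = U * (W * \<xi> g)"
      using assoc_mult_mat[OF Uc(1) Wc xi[OF g]] UW by simp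
    finally have "U * (phi g * W) = U * (W * \<xi> g)" .
    then have "mat_adjoint U * (U * (phi g * W)) = mat_adjoint U * (U * (W * \<xi> g))" by simp
    then show ?thesis using cancelU[OF mult_carrier_mat[OF Pc Wc]] cancelU[OF mult_carrier_mat[OF Wc xi[OF g]]] by simp
  qed
  have Wnz: "W \<noteq> 0\<^sub>m m d"
  proof
    assume "W = 0\<^sub>m m d"
    then have "E = 0\<^sub>m m d" using UW Uc by simp
    moreover have "E $$ (ofs, 0) = 1" using ofs Nm dpos by (simp add: E_def)
    ultimately show False using ofs Nm dpos by simp
  qed
  define Wb where "Wb a = mat n d (\<lambda>(i,j). W $$ (a*n+i, j))" for a
  have Wbc[simp]: "\<And>a. Wb a \<in> carrier_mat n d" by (simp add: Wb_def)
  have Wbd[simp]: "\<And>a. dim_row (Wb a) = n" "\<And>a. dim_col (Wb a) = d" by (simp_all add: Wb_def)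
  have Wcol: "W = colb k n d Wb" unfolding Wb_def using Wc m_def by (intro colb_of) simp
  have blkeq: "f (sg g a) * Wb (pi g a) = Wb a * \<xi> g" if g: "g \<in> carrier G" and a: "a < k" for g a
  proof -
    have "colb k n d (\<lambda>a. f (sg g a) * Wb (pi g a)) = phi g * W"
      unfolding Wcol phi_def using g by (intro pmat_mult_colb[symmetric]) (auto simp: pi_lt)
    also have "\<dots> = W * \<xi> g" using inter g by simp
    also have "\<dots> = colb k n d (\<lambda>a. Wb a * \<xi> g)"
      unfolding Wcol using xi[OF g] by (intro colb_mult) auto
    finally have cq: "colb k n d (\<lambda>a. f (sg g a) * Wb (pi g a)) = colb k n d (\<lambda>a. Wb a * \<xi> g)" .
    have c1: "f (sg g a) * Wb (pi g a) \<in> carrier_mat n d" using mult_carrier_mat[OF f_carrier[OF sg_carr[OF a g]] Wbc] .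
    have c2: "Wb a * \<xi> g \<in> carrier_mat n d" using mult_carrier_mat[OF Wbc xi[OF g]] .
    show ?thesis using colb_inj[OF cq a c1 c2] .
  qed
  define a0 where "a0 = ie \<one>"
  have a0: "a0 < k" "e a0 = \<one>" unfolding a0_def using ie_lt[OF one_R] e_ie[OF one_R] by auto
  define A where "A = Wb a0"
  have Ac: "A \<in> carrier_mat n d" by (simp add: A_def)
  have AS: "f s * A = A * \<xi> s" if s: "s \<in> S" for s
  proof -
    have sc: "s \<in> carrier G" using S_carr s .
    have "pi s a0 = a0" unfolding pi_def using a0 sc crep_S[OF s] by (simp add: a0_def)
    moreover have "sg s a0 = s" unfolding sg_def using a0 sc crep_S[OF s] by simp
    ultimately show ?thesis using blkeq[OF sc a0(1)] by (simp add: A_def)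
  qed
  have Anz: "A \<noteq> 0\<^sub>m n d"
  proof
    assume A0: "A = 0\<^sub>m n d"
    have "Wb a = 0\<^sub>m n d" if a: "a < k" for a
    proof -
      have gc: "e a \<in> carrier G" using a by simp
      have "pi (e a) a0 = a" unfolding pi_def using a a0 by simp
      then have z0: "f (sg (e a) a0) * Wb a = 0\<^sub>m n d"
        using blkeq[OF gc a0(1)] A0 xi[OF gc] by (simp add: A_def)
      have sgc: "sg (e a) a0 \<in> carrier G" using sg_carr[OF a0(1) gc] .
      have fc: "f (sg (e a) a0) \<in> carrier_mat n n" using f_carrier[OF sgc] .
      have "Wb a = (mat_adjoint (f (sg (e a) a0)) * f (sg (e a) a0)) * Wb a"
        using f_adj[OF sgc] by simp
      also have "\<dots> = mat_adjoint (f (sg (e a) a0)) * (f (sg (e a) a0) * Wb a)"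
        using assoc_mult_mat[OF adj_carrier[OF fc] fc Wbc] .
      also have "\<dots> = 0\<^sub>m n d" using z0 fc by simp
      finally show ?thesis .
    qed
    then have "W = colb k n d (\<lambda>a. 0\<^sub>m n d)" unfolding Wcol by (intro colb_cong) simp
    also have "\<dots> = 0\<^sub>m m d" unfolding m_def by (rule eq_matI) (auto simp: colb_def mod_lt)
    finally show False using Wnz by simp
  qed
  obtain i0 j0 where ij0: "i0 < n" "j0 < d" "A $$ (i0, j0) \<noteq> 0"
  proof -
    have "\<exists>i0 j0. i0 < n \<and> j0 < d \<and> A $$ (i0, j0) \<noteq> 0"
    proof (rule ccontr)
      assume "\<not> ?thesis"
      then have "A = 0\<^sub>m n d" using Ac by (intro eq_matI) auto
      then show False using Anz by simp
    qed
    then show ?thesis using that by blast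
  qed
  define p where "p = i0 * d + j0"
  have p: "p < n * d" "p div d = i0" "p mod d = j0" using ij0 idx_lt[of i0 n j0 d] by (auto simp: p_def)
  have Sf: "finite S" using S_fin .
  let ?K = "\<lambda>s q. f s $$ (i0, q div d) * cnj (\<xi> s $$ (j0, q mod d))"
  have inner: "(\<Sum>q<n*d. ?K s q * A $$ (q div d, q mod d)) = A $$ (i0, j0)" if s: "s \<in> S" for s
  proof -
    have sc: "s \<in> carrier G" using S_carr s .
    have fc: "f s \<in> carrier_mat n n" using sc by simp
    have xc: "\<xi> s \<in> carrier_mat d d" using xi sc by simp
    have "(\<Sum>q<n*d. ?K s q * A $$ (q div d, q mod d)) =
       (\<Sum>i'<n. \<Sum>j'<d. ?K s (i'*d+j') * A $$ ((i'*d+j') div d, (i'*d+j') mod d))"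
      by (rule sum_split)
    also have "\<dots> = (\<Sum>i'<n. \<Sum>j'<d. f s $$ (i0, i') * A $$ (i', j') * cnj (\<xi> s $$ (j0, j')))"
      by (intro sum.cong refl) (simp add: mult_ac)
    also have "\<dots> = (\<Sum>j'<d. \<Sum>i'<n. f s $$ (i0, i') * A $$ (i', j') * cnj (\<xi> s $$ (j0, j')))"
      by (rule sum.swap)
    also have "\<dots> = (\<Sum>j'<d. (\<Sum>i'<n. f s $$ (i0, i') * A $$ (i', j')) * cnj (\<xi> s $$ (j0, j')))"
      by (simp add: sum_distrib_right)
    also have "\<dots> = (\<Sum>j'<d. (f s * A) $$ (i0, j') * mat_adjoint (\<xi> s) $$ (j', j0))"
    proof (intro sum.cong refl)
      fix j' assume "j' \<in> {..<d}"
      then have j': "j' < d" by simp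
      show "(\<Sum>i'<n. f s $$ (i0, i') * A $$ (i', j')) * cnj (\<xi> s $$ (j0, j')) = (f s * A) $$ (i0, j') * mat_adjoint (\<xi> s) $$ (j', j0)"
        using fc Ac xc ij0 j' by (simp add: mult_entry)
    qed
    also have "\<dots> = (f s * A * mat_adjoint (\<xi> s)) $$ (i0, j0)"
      using fc Ac xc ij0 by (simp add: mult_entry)
    also have "f s * A * mat_adjoint (\<xi> s) = A * (\<xi> s * mat_adjoint (\<xi> s))"
      using AS[OF s] Ac xc by (simp add: assoc_mult_mat[of A n d "\<xi> s" d "mat_adjoint (\<xi> s)" d])
    also have "\<dots> = A" using xiu[OF sc] Ac by simp
    finally show ?thesis .
  qed
  have "(\<Sum>q<n*d. fourier S n f d \<xi> $$ (p, q) * A $$ (q div d, q mod d)) =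
      (\<Sum>q<n*d. (\<Sum>s\<in>S. ?K s q) / of_nat (card S) * A $$ (q div d, q mod d))"
  proof (intro sum.cong refl)
    fix q assume "q \<in> {..<n*d}"
    then have q: "q < n*d" by simp
    have kr: "kron (f s) (map_mat cnj (\<xi> s)) $$ (p,q) = ?K s q" if s: "s \<in> S" for s
    proof -
      have sc: "s \<in> carrier G" using S_carr s .
      have fc: "dim_row (f s) = n" "dim_col (f s) = n" using f_carrier[OF sc] by auto
      have xc: "dim_row (\<xi> s) = d" "dim_col (\<xi> s) = d" using xi[OF sc] by auto
      show ?thesis unfolding kron_def using fc xc p q dpos by simp
    qed
    have "fourier S n f d \<xi> $$ (p, q) = (\<Sum>s\<in>S. kron (f s) (map_mat cnj (\<xi> s)) $$ (p,q)) / of_nat (card S)"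
      unfolding fourier_def using p q by simp
    also have "\<dots> = (\<Sum>s\<in>S. ?K s q) / of_nat (card S)" using kr by simp
    finally have "fourier S n f d \<xi> $$ (p, q) = (\<Sum>s\<in>S. ?K s q) / of_nat (card S)" .
    then show "fourier S n f d \<xi> $$ (p, q) * A $$ (q div d, q mod d) =
      (\<Sum>s\<in>S. ?K s q) / of_nat (card S) * A $$ (q div d, q mod d)" by simp
  qed
  also have "\<dots> = (\<Sum>q<n*d. (\<Sum>s\<in>S. ?K s q * A $$ (q div d, q mod d)) / of_nat (card S))"
    by (intro sum.cong refl) (simp add: sum_distrib_right)
  also have "\<dots> = (\<Sum>q<n*d. \<Sum>s\<in>S. ?K s q * A $$ (q div d, q mod d)) / of_nat (card S)"
    by (simp add: sum_divide_distrib)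
  also have "\<dots> = (\<Sum>s\<in>S. \<Sum>q<n*d. ?K s q * A $$ (q div d, q mod d)) / of_nat (card S)"
    by (subst sum.swap) (rule refl)
  also have "\<dots> = (\<Sum>s\<in>S. A $$ (i0, j0)) / of_nat (card S)"
  proof -
    have eqS: "(\<Sum>s\<in>S. \<Sum>q<n*d. ?K s q * A $$ (q div d, q mod d)) = (\<Sum>s\<in>S. A $$ (i0, j0))"
      by (rule sum.cong[OF refl inner])
    show ?thesis by (simp only: eqS)
  qed
  also have "\<dots> = A $$ (i0, j0)" using S_card_pos by simp
  finally have "(\<Sum>q<n*d. fourier S n f d \<xi> $$ (p, q) * A $$ (q div d, q mod d)) = A $$ (i0, j0)" .
  moreover have "(\<Sum>q<n*d. fourier S n f d \<xi> $$ (p, q) * A $$ (q div d, q mod d)) = 0"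
    using F0 p by simp
  ultimately show False using ij0 by simp
qed

end

theorem theorem4p1:
  fixes G (structure) and n :: nat and \<rho> :: "complex mat" and \<epsilon> :: real
    and f :: "'g \<Rightarrow> complex mat" and S :: "'g set"
  assumes "group G" and "finite (carrier G)"
    and "is_state n \<rho>" and "\<epsilon> \<ge> 0"
    and "approx_hom G n \<rho> \<epsilon> f"
    and "subgroup S G"
    and "\<forall>s \<in> S. \<forall>g \<in> carrier G. f (s \<otimes> g) = f s * f g"
  shows "unitary_rep (G\<lparr>carrier := S\<rparr>) n f \<and>
    (\<exists>(m :: nat) V (\<phi> :: 'g \<Rightarrow> complex mat).
       isometry_mat m n V \<and> unitary_rep G m \<phi> \<and>
       (\<forall>g \<in> carrier G. (rho_norm \<rho> (V * f g - \<phi> g * V))\<^sup>2 \<le> \<epsilon>) \<and>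
       (\<forall>d \<xi>. irr_component G m \<phi> d \<xi> \<longrightarrow> fourier S n f d \<xi> \<noteq> 0\<^sub>m (n * d) (n * d)))"
proof -
  interpret grp: group G by (rule assms(1))
  have Ssub: "S \<subseteq> carrier G" using assms(6) subgroup.subset by blast
  have unit: "\<And>g. g \<in> carrier G \<Longrightarrow> unitary_mat n (f g)" using assms(5) by (simp add: approx_hom_def)
  have H: "\<And>g. g \<in> carrier G \<Longrightarrow> (1 / real (card (carrier G))) *
        (\<Sum>h \<in> carrier G. (rho_norm \<rho> (f h * f g - f (h \<otimes> g)))\<^sup>2) \<le> \<epsilon>"
    using assms(5) by (simp add: approx_hom_def)
  have rho: "\<rho> \<in> carrier_mat n n" using assms(3) by (simp add: is_state_def)
  have part1: "unitary_rep (G\<lparr>carrier := S\<rparr>) n f"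
    unfolding unitary_rep_def using unit Ssub assms(7) by auto
  define R where "R = crep G S ` carrier G"
  have Rf: "finite R" unfolding R_def using assms(2) by simp
  obtain e where e: "bij_betw e {0..<card R} R" using ex_bij_betw_nat_finite[OF Rf] by blast
  have e': "bij_betw e {..<card R} (crep G S ` carrier G)" using e unfolding R_def by (simp add: lessThan_atLeast0)
  have icx: "ictx G S f n (card R) e"
  proof (rule ictx.intro[OF assms(1)], rule ictx_axioms.intro)
    show "finite (carrier G)" by (rule assms(2))
    show "subgroup S G" by (rule assms(6))
    show "\<And>g. g \<in> carrier G \<Longrightarrow> unitary_mat n (f g)" by (rule unit)
    show "\<And>s g. s \<in> S \<Longrightarrow> g \<in> carrier G \<Longrightarrow> f (s \<otimes> g) = f s * f g" using assms(7) by simp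
    show "bij_betw e {..<card R} (crep G S ` carrier G)" by (rule e')
  qed
  interpret ic: ictx G S f n "card R" e by (rule icx)
  have "isometry_mat (card R * n) n ic.V \<and> unitary_rep G (card R * n) ic.phi \<and>
       (\<forall>g \<in> carrier G. (rho_norm \<rho> (ic.V * f g - ic.phi g * ic.V))\<^sup>2 \<le> \<epsilon>) \<and>
       (\<forall>d \<xi>. irr_component G (card R * n) ic.phi d \<xi> \<longrightarrow> fourier S n f d \<xi> \<noteq> 0\<^sub>m (n * d) (n * d))"
    using ic.V_iso ic.phi_rep ic.norm_bound[OF rho _ H] ic.fourier_ok by blast
  then show ?thesis using part1 by blast
qed


end
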